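(* Let $p\neq 2$ be a prime and $G=Z_{p^{\lambda_1}}\times\cdots\times Z_{p^{\lambda_n}}$ with $0<\lambda_1<\cdots<\lambda_n$. The join-irreducible elements of $\mathrm{Char}(G)$ are precisely the subgroups $J(i,j)$ for $i\in\{1,\dots,n\}$, $j\in\{1,\dots,\lambda_i\}$.
   Context: $\mathrm{Char}(G)$ is the lattice of characteristic subgroups of $G$; an element of a finite lattice is join-irreducible if it is not the bottom element and is not the join of two elements each strictly below it. Tuples are ordered componentwise; for $\mathbf 0\le\mathbf a\le(\lambda_1,\dots,\lambda_n)$, $T(\mathbf a)$ is the set of $(g_1,\dots,g_n)\in G$ with $|g_i|=p^{a_i}$, and $R(\mathbf a)=\bigcup_{\mathbf b\le\mathbf a}T(\mathbf b)$. For $i\in\{1,\dots,n\}$ and $j\in\{1,\dots,\lambda_i\}$, $J(i,j)=R(\mathbf a)$ where $a_k=j$ for $k\ge i$ and $a_k=\max\{0,\,j-(\lambda_i-\lambda_k)\}$ for $k<i$. *)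

theory Defs
  imports "HOL-Algebra.Algebra"
begin

text \<open>The group Z_{p^lam 1} x ... x Z_{p^lam n}, written additively on tuples
  g = (g 1, ..., g n) with 0 <= g i < p^(lam i); coordinates outside 1..n are 0.\<close>
definition cycprod :: "nat \<Rightarrow> nat \<Rightarrow> (nat \<Rightarrow> nat) \<Rightarrow> (nat \<Rightarrow> int) monoid" where
  "cycprod p n lam =
     \<lparr> carrier = {g. (\<forall>i\<in>{1..n}. 0 \<le> g i \<and> g i < int p ^ lam i) \<and> (\<forall>i. i \<notin> {1..n} \<longrightarrow> g i = 0)},
       monoid.mult = (\<lambda>g h i. if i \<in> {1..n} then (g i + h i) mod (int p ^ lam i) else 0),
       one = (\<lambda>i. 0) \<rparr>"

definition cyc_ord :: "int \<Rightarrow> int \<Rightarrow> nat" where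
  "cyc_ord m x = (LEAST k::nat. 0 < k \<and> m dvd (int k * x))"

definition Char :: "('a, 'b) monoid_scheme \<Rightarrow> 'a set set" where
  "Char G = {H. subgroup H G \<and> (\<forall>\<phi>\<in>iso G G. \<phi> ` H = H)}"

text \<open>Join-irreducible elements of the lattice Char(G) (ordered by inclusion):
  not the bottom element, and not the join (least upper bound in Char(G))
  of two elements strictly below it.\<close>
definition is_join_Char :: "('a, 'b) monoid_scheme \<Rightarrow> 'a set \<Rightarrow> 'a set \<Rightarrow> 'a set \<Rightarrow> bool" where
  "is_join_Char G A B J \<longleftrightarrow> J \<in> Char G \<and> A \<subseteq> J \<and> B \<subseteq> J \<and>
     (\<forall>K\<in>Char G. A \<subseteq> K \<and> B \<subseteq> K \<longrightarrow> J \<subseteq> K)"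

definition join_irreducible_Char :: "('a, 'b) monoid_scheme \<Rightarrow> 'a set \<Rightarrow> bool" where
  "join_irreducible_Char G J \<longleftrightarrow> J \<in> Char G \<and>
     \<not> (\<forall>K\<in>Char G. J \<subseteq> K) \<and>
     \<not> (\<exists>A\<in>Char G. \<exists>B\<in>Char G. A \<subset> J \<and> B \<subset> J \<and> is_join_Char G A B J)"

definition Tset :: "nat \<Rightarrow> nat \<Rightarrow> (nat \<Rightarrow> nat) \<Rightarrow> (nat \<Rightarrow> nat) \<Rightarrow> (nat \<Rightarrow> int) set" where
  "Tset p n lam a = {g \<in> carrier (cycprod p n lam).
      \<forall>i\<in>{1..n}. cyc_ord (int p ^ lam i) (g i) = p ^ a i}"

definition Rset :: "nat \<Rightarrow> nat \<Rightarrow> (nat \<Rightarrow> nat) \<Rightarrow> (nat \<Rightarrow> nat) \<Rightarrow> (nat \<Rightarrow> int) set" where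
  "Rset p n lam a = (\<Union>b\<in>{b. \<forall>i\<in>{1..n}. b i \<le> a i}. Tset p n lam b)"

definition Jset :: "nat \<Rightarrow> nat \<Rightarrow> (nat \<Rightarrow> nat) \<Rightarrow> nat \<Rightarrow> nat \<Rightarrow> (nat \<Rightarrow> int) set" where
  "Jset p n lam i j = Rset p n lam
     (\<lambda>k. if k \<ge> i then j else nat (max 0 (int j - (int (lam i) - int (lam k)))))"

end

theory Submission
  imports Defs
begin



lemma iso_facts:
  assumes "\<phi> \<in> iso G G"
  shows "\<phi> \<in> hom G G" "bij_betw \<phi> (carrier G) (carrier G)"
  using assms by (auto simp: iso_def)

lemma Char_one: assumes "group G" shows "{\<one>\<^bsub>G\<^esub>} \<in> Char G"
  using assms by (auto simp: Char_def iso_def group.triv_subgroup hom_one)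

lemma Char_carrier: assumes "group G" shows "carrier G \<in> Char G"
  using assms by (auto simp: Char_def iso_def group.subgroup_self bij_betw_def)

lemma Char_bot: assumes "group G" "K \<in> Char G" shows "{\<one>\<^bsub>G\<^esub>} \<subseteq> K"
  using assms by (auto simp: Char_def subgroup.one_closed)

lemma Char_Inter:
  assumes G: "group G" and ne: "\<K> \<noteq> {}" and sub: "\<K> \<subseteq> Char G"
  shows "\<Inter>\<K> \<in> Char G"
proof -
  have sg: "subgroup (\<Inter>\<K>) G"
    using sub ne by (intro group.subgroups_Inter[OF G]) (auto simp: Char_def)
  have "\<phi> ` \<Inter>\<K> = \<Inter>\<K>" if phi: "\<phi> \<in> iso G G" for \<phi>
  proof
    have "\<phi> ` K = K" if "K \<in> \<K>" for K using sub that phi by (auto simp: Char_def)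
    then show "\<phi> ` \<Inter>\<K> \<subseteq> \<Inter>\<K>" by blast
  next
    have bij: "bij_betw \<phi> (carrier G) (carrier G)" using phi by (auto simp: iso_def)
    show "\<Inter>\<K> \<subseteq> \<phi> ` \<Inter>\<K>"
    proof
      fix y assume y: "y \<in> \<Inter>\<K>"
      obtain K0 where K0: "K0 \<in> \<K>" using ne by blast
      have ysub: "y \<in> carrier G" using y K0 sub by (auto simp: Char_def dest: subgroup.subset)
      then obtain x where x: "x \<in> carrier G" "\<phi> x = y" using bij by (metis bij_betw_def imageE)
      have "x \<in> K" if K: "K \<in> \<K>" for K
      proof -
        have "y \<in> \<phi> ` K" using sub K phi y by (auto simp: Char_def)
        then obtain x' where "x' \<in> K" "\<phi> x' = y" by blast
        moreover have "x' \<in> carrier G" using `x' \<in> K` sub K by (auto simp: Char_def dest: subgroup.subset)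
        ultimately show ?thesis using x bij by (metis bij_betw_def inv_into_f_f)
      qed
      then show "y \<in> \<phi> ` \<Inter>\<K>" using x by blast
    qed
  qed
  then show ?thesis using sg by (auto simp: Char_def)
qed

lemma Char_Int:
  assumes G: "group G" and "A \<in> Char G" "B \<in> Char G" shows "A \<inter> B \<in> Char G"
  using Char_Inter[OF G, of "{A,B}"] assms by auto

lemma Char_setmult:
  assumes G: "comm_group G" and A: "A \<in> Char G" and B: "B \<in> Char G"
  shows "A <#>\<^bsub>G\<^esub> B \<in> Char G"
proof -
  have sA: "subgroup A G" and sB: "subgroup B G" using A B by (auto simp: Char_def)
  have "subgroup (A <#>\<^bsub>G\<^esub> B) G" by (rule comm_group.mult_subgroups[OF G sA sB])
  moreover have "\<phi> ` (A <#>\<^bsub>G\<^esub> B) = A <#>\<^bsub>G\<^esub> B" if phi: "\<phi> \<in> iso G G" for \<phi>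
  proof -
    have h: "\<phi> \<in> hom G G" using phi by (auto simp: iso_def)
    have hm: "\<phi> (a \<otimes>\<^bsub>G\<^esub> b) = \<phi> a \<otimes>\<^bsub>G\<^esub> \<phi> b" if "a \<in> A" "b \<in> B" for a b
      using h sA sB that by (intro hom_mult) (auto dest: subgroup.mem_carrier)
    have "\<phi> ` (A <#>\<^bsub>G\<^esub> B) = (\<phi> ` A) <#>\<^bsub>G\<^esub> (\<phi> ` B)"
    proof
      show "\<phi> ` (A <#>\<^bsub>G\<^esub> B) \<subseteq> (\<phi> ` A) <#>\<^bsub>G\<^esub> (\<phi> ` B)"
        unfolding set_mult_def using hm by fastforce
      show "(\<phi> ` A) <#>\<^bsub>G\<^esub> (\<phi> ` B) \<subseteq> \<phi> ` (A <#>\<^bsub>G\<^esub> B)"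
      proof
        fix z assume "z \<in> (\<phi> ` A) <#>\<^bsub>G\<^esub> (\<phi> ` B)"
        then obtain a b where "a \<in> A" "b \<in> B" "z = \<phi> a \<otimes>\<^bsub>G\<^esub> \<phi> b"
          unfolding set_mult_def by blast
        moreover have "a \<otimes>\<^bsub>G\<^esub> b \<in> A <#>\<^bsub>G\<^esub> B" using `a \<in> A` `b \<in> B` unfolding set_mult_def by blast
        ultimately show "z \<in> \<phi> ` (A <#>\<^bsub>G\<^esub> B)" using hm[of a b] by (metis image_eqI)
      qed
    qed
    then show ?thesis using A B phi by (auto simp: Char_def)
  qed
  ultimately show ?thesis by (auto simp: Char_def)
qed

definition Om :: "('a, 'b) monoid_scheme \<Rightarrow> nat \<Rightarrow> 'a set" where
  "Om G m = {g \<in> carrier G. g [^]\<^bsub>G\<^esub> m = \<one>\<^bsub>G\<^esub>}"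
definition Pw :: "('a, 'b) monoid_scheme \<Rightarrow> nat \<Rightarrow> 'a set" where
  "Pw G m = (\<lambda>h. h [^]\<^bsub>G\<^esub> m) ` carrier G"

lemma Char_Om:
  assumes G: "comm_group G" shows "Om G m \<in> Char G"
proof -
  interpret comm_group G by (rule G)
  have "subgroup (Om G m) G"
    by (rule subgroupI) (auto simp: Om_def nat_pow_inv pow_mult_distrib m_comm)
  moreover have "\<phi> ` Om G m = Om G m" if phi: "\<phi> \<in> iso G G" for \<phi>
  proof -
    have h: "\<phi> \<in> hom G G" and bij: "bij_betw \<phi> (carrier G) (carrier G)" using phi by (auto simp: iso_def)
    have pw: "\<phi> (x [^]\<^bsub>G\<^esub> m) = \<phi> x [^]\<^bsub>G\<^esub> m" if "x \<in> carrier G" for x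
      using hom_nat_pow[OF h that] by (simp add: is_group)
    have one: "\<phi> \<one>\<^bsub>G\<^esub> = \<one>\<^bsub>G\<^esub>" using hom_one[OF h] by (simp add: is_group)
    show ?thesis
    proof
      show "\<phi> ` Om G m \<subseteq> Om G m" using pw one h by (auto simp: Om_def hom_def) (metis pw)
    next
      show "Om G m \<subseteq> \<phi> ` Om G m"
      proof
        fix y assume y: "y \<in> Om G m"
        then obtain x where x: "x \<in> carrier G" "\<phi> x = y" using bij unfolding Om_def bij_betw_def by (metis (no_types, lifting) imageE mem_Collect_eq)
        have "\<phi> (x [^]\<^bsub>G\<^esub> m) = \<phi> \<one>\<^bsub>G\<^esub>" using pw[OF x(1)] x y one by (simp add: Om_def)
        then have "x [^]\<^bsub>G\<^esub> m = \<one>\<^bsub>G\<^esub>" using bij x by (metis bij_betw_def inj_onD nat_pow_closed one_closed)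
        then show "y \<in> \<phi> ` Om G m" using x by (auto simp: Om_def)
      qed
    qed
  qed
  ultimately show ?thesis by (auto simp: Char_def)
qed

lemma Char_Pw:
  assumes G: "comm_group G" shows "Pw G m \<in> Char G"
proof -
  interpret comm_group G by (rule G)
  have "subgroup (Pw G m) G"
  proof (rule subgroupI)
    show "Pw G m \<subseteq> carrier G" by (auto simp: Pw_def)
    show "Pw G m \<noteq> {}" by (auto simp: Pw_def)
    fix a assume "a \<in> Pw G m" then show "inv\<^bsub>G\<^esub> a \<in> Pw G m"
      by (auto simp: Pw_def nat_pow_inv[symmetric])
  next
    fix a b assume "a \<in> Pw G m" "b \<in> Pw G m" then show "a \<otimes>\<^bsub>G\<^esub> b \<in> Pw G m"
      by (auto simp: Pw_def pow_mult_distrib[symmetric] m_comm)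
  qed
  moreover have "\<phi> ` Pw G m = Pw G m" if phi: "\<phi> \<in> iso G G" for \<phi>
  proof -
    have h: "\<phi> \<in> hom G G" and bij: "bij_betw \<phi> (carrier G) (carrier G)" using phi by (auto simp: iso_def)
    have pw: "\<phi> (x [^]\<^bsub>G\<^esub> m) = \<phi> x [^]\<^bsub>G\<^esub> m" if "x \<in> carrier G" for x
      using hom_nat_pow[OF h that] by (simp add: is_group)
    have im: "\<phi> ` carrier G = carrier G" using bij by (simp add: bij_betw_def)
    have "\<phi> ` Pw G m = (\<lambda>h. h [^]\<^bsub>G\<^esub> m) ` (\<phi> ` carrier G)"
      unfolding Pw_def image_image using pw by (auto intro!: image_cong)
    then show ?thesis using im by (simp add: Pw_def)
  qed
  ultimately show ?thesis by (auto simp: Char_def)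
qed

lemma ji_finite:
  assumes G: "group G" and H: "join_irreducible_Char G H"
  shows "finite F \<Longrightarrow> F \<subseteq> Char G \<Longrightarrow> (\<forall>A\<in>F. A \<subseteq> H) \<Longrightarrow>
         H \<subseteq> \<Inter>{K\<in>Char G. \<Union>F \<subseteq> K} \<Longrightarrow> H \<in> F"
proof (induction F rule: finite_induct)
  case empty
  have "{\<one>\<^bsub>G\<^esub>} \<in> {K\<in>Char G. \<Union>{} \<subseteq> K}" using Char_one[OF G] by simp
  then have "H \<subseteq> {\<one>\<^bsub>G\<^esub>}" using empty.prems(3) by blast
  then have "\<forall>K\<in>Char G. H \<subseteq> K" using Char_bot[OF G] by blast
  then show ?case using H by (simp add: join_irreducible_Char_def)
next
  case (insert A F)
  let ?B = "\<Inter>{K\<in>Char G. \<Union>F \<subseteq> K}"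
  have HC: "H \<in> Char G" using H by (simp add: join_irreducible_Char_def)
  have "\<forall>Y\<in>F. subgroup Y G" using insert.prems(1) unfolding Char_def by blast
  then have sub: "\<Union>F \<subseteq> carrier G" by (meson Union_least subgroup.subset)
  have ne: "carrier G \<in> {K\<in>Char G. \<Union>F \<subseteq> K}" using Char_carrier[OF G] sub by simp
  have BC: "?B \<in> Char G"
    by (rule Char_Inter[OF G]) (use ne in fastforce)+
  have "H \<in> {K\<in>Char G. \<Union>F \<subseteq> K}" using HC insert.prems(2) by auto
  then have BH: "?B \<subseteq> H" by (rule Inter_lower)
  have AH: "A \<subseteq> H" using insert.prems(2) by blast
  have AC: "A \<in> Char G" using insert.prems(1) by blast
  have "is_join_Char G A ?B H"
    unfolding is_join_Char_def
  proof (intro conjI HC AH BH ballI impI)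
    fix K assume K: "K \<in> Char G" "A \<subseteq> K \<and> ?B \<subseteq> K"
    have "\<Union>F \<subseteq> ?B" by blast
    then have "\<Union>(insert A F) \<subseteq> K" using K by blast
    then show "H \<subseteq> K" using insert.prems(3) K(1) by blast
  qed
  then have "\<not> (A \<subset> H \<and> ?B \<subset> H)" using H AC BC
    unfolding join_irreducible_Char_def by blast
  then have "A = H \<or> ?B = H" using AH BH by blast
  then show ?case
  proof
    assume "?B = H"
    then have "H \<in> F" using insert.IH insert.prems(1,2) by auto
    then show ?thesis by simp
  qed simp
qed




lemma pow_dvd_cancel:
  fixes p :: nat and x :: int
  assumes "p > 0"
  shows "int p ^ L dvd int p ^ a * x \<longleftrightarrow> int p ^ (L - a) dvd x"
proof (cases "a \<le> L")
  case True
  then have "int p ^ L = int p ^ a * int p ^ (L - a)" by (simp add: power_add[symmetric])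
  then show ?thesis using assms by simp
next
  case False
  then have "int p ^ L dvd int p ^ a" by (simp add: le_imp_power_dvd)
  then show ?thesis using False by auto
qed

lemma pow_dvd_max:
  fixes p :: nat and x :: int
  shows "int p ^ a dvd x \<and> int p ^ b dvd x \<longleftrightarrow> int p ^ max a b dvd x"
proof (cases "a \<le> b")
  case True
  then have "int p ^ a dvd int p ^ b" by (simp add: le_imp_power_dvd)
  then show ?thesis using True by (auto simp: max_def intro: dvd_trans)
next
  case False
  then have "int p ^ b dvd int p ^ a" by (simp add: le_imp_power_dvd)
  then show ?thesis using False by (auto simp: max_def intro: dvd_trans)
qed

lemma cyc_ord_dvd:
  assumes m: "0 < m"
  shows "int (cyc_ord m x) dvd int k \<longleftrightarrow> m dvd int k * x"
proof -
  let ?P = "\<lambda>k::nat. 0 < k \<and> m dvd (int k * x)"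
  have ex: "?P (nat m)" using m by simp
  have P: "?P (cyc_ord m x)" unfolding cyc_ord_def by (rule LeastI[of ?P, OF ex])
  have min: "\<And>k. ?P k \<Longrightarrow> cyc_ord m x \<le> k" unfolding cyc_ord_def by (rule Least_le)
  show ?thesis
  proof
    assume "int (cyc_ord m x) dvd int k"
    then obtain c where "int k = int (cyc_ord m x) * c" by blast
    then have "int k * x = c * (int (cyc_ord m x) * x)" by (simp add: ac_simps)
    then show "m dvd int k * x" using P by (metis dvd_mult)
  next
    assume h: "m dvd int k * x"
    let ?o = "cyc_ord m x"
    have "k = (k div ?o) * ?o + k mod ?o" by (metis div_mult_mod_eq)
    then have "int k * x = int (k div ?o) * (int ?o * x) + int (k mod ?o) * x"
      by (metis (no_types, opaque_lifting) distrib_right mult.assoc of_nat_add of_nat_mult)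
    then have "m dvd int (k mod ?o) * x" using h P
      by (metis dvd_add_right_iff dvd_mult)
    moreover have "k mod ?o < ?o" using P by simp
    ultimately have "k mod ?o = 0" using min by (meson leD not_gr0)
    then show "int ?o dvd int k" by auto
  qed
qed

locale cp =
  fixes p n :: nat and lam :: "nat \<Rightarrow> nat"
  assumes pprime: "Factorial_Ring.prime p"
begin

abbreviation "G \<equiv> cycprod p n lam"
abbreviation q where "q i \<equiv> int p ^ lam i"

lemma p_gt1: "p > 1" using pprime prime_gt_1_nat by blast
lemma p_pos: "p > 0" using p_gt1 by simp
lemma q_pos: "q i > 0" using p_pos by simp

lemma carrier_iff: "g \<in> carrier G \<longleftrightarrow> (\<forall>i\<in>{1..n}. 0 \<le> g i \<and> g i < q i) \<and> (\<forall>i. i \<notin> {1..n} \<longrightarrow> g i = 0)"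
  by (simp add: cycprod_def)
lemma mult_eq: "g \<otimes>\<^bsub>G\<^esub> h = (\<lambda>i. if i \<in> {1..n} then (g i + h i) mod q i else 0)"
  by (simp add: cycprod_def)
lemma one_eq: "\<one>\<^bsub>G\<^esub> = (\<lambda>i. 0)"
  by (simp add: cycprod_def)

lemma comm_G: "comm_group G"
proof (rule comm_groupI)
  show "x \<otimes>\<^bsub>G\<^esub> y \<in> carrier G" if "x \<in> carrier G" "y \<in> carrier G" for x y
    using q_pos by (auto simp: carrier_iff mult_eq)
  show "\<one>\<^bsub>G\<^esub> \<in> carrier G" using q_pos by (auto simp: carrier_iff one_eq)
  show "x \<otimes>\<^bsub>G\<^esub> y \<otimes>\<^bsub>G\<^esub> z = x \<otimes>\<^bsub>G\<^esub> (y \<otimes>\<^bsub>G\<^esub> z)" if "x \<in> carrier G" "y \<in> carrier G" "z \<in> carrier G" for x y z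
    by (auto simp: mult_eq mod_add_left_eq mod_add_right_eq add.assoc)
  show "x \<otimes>\<^bsub>G\<^esub> y = y \<otimes>\<^bsub>G\<^esub> x" if "x \<in> carrier G" "y \<in> carrier G" for x y
    by (auto simp: mult_eq add.commute)
  show "\<one>\<^bsub>G\<^esub> \<otimes>\<^bsub>G\<^esub> x = x" if "x \<in> carrier G" for x
    using that by (auto simp: mult_eq one_eq carrier_iff)
  show "\<exists>y\<in>carrier G. y \<otimes>\<^bsub>G\<^esub> x = \<one>\<^bsub>G\<^esub>" if "x \<in> carrier G" for x
  proof (intro bexI)
    let ?y = "\<lambda>i. if i \<in> {1..n} then (- x i) mod q i else 0"
    show "?y \<in> carrier G" using q_pos by (auto simp: carrier_iff)
    show "?y \<otimes>\<^bsub>G\<^esub> x = \<one>\<^bsub>G\<^esub>" by (auto simp: mult_eq one_eq mod_add_left_eq)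
  qed
qed

lemma grp_G: "group G" using comm_G comm_group.axioms(2) by blast

lemma pow_eq: "g [^]\<^bsub>G\<^esub> (m::nat) = (\<lambda>i. if i \<in> {1..n} then (int m * g i) mod q i else 0)"
proof (induction m)
  case 0 then show ?case by (auto simp: one_eq)
next
  case (Suc m) then show ?case
    by (intro ext) (simp add: mult_eq mod_add_left_eq mod_add_right_eq ring_distribs add.commute)
qed

lemma Rset_iff:
  "g \<in> Rset p n lam a \<longleftrightarrow> g \<in> carrier G \<and> (\<forall>i\<in>{1..n}. q i dvd int p ^ a i * g i)"
proof
  assume "g \<in> Rset p n lam a"
  then obtain b where b: "\<forall>i\<in>{1..n}. b i \<le> a i" and g: "g \<in> Tset p n lam b"
    by (auto simp: Rset_def)
  have "q i dvd int p ^ a i * g i" if i: "i \<in> {1..n}" for i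
  proof -
    have "cyc_ord (q i) (g i) = p ^ b i" using g i by (auto simp: Tset_def)
    moreover have "int p ^ b i dvd int p ^ a i" using b i by (simp add: le_imp_power_dvd)
    ultimately have "int (cyc_ord (q i) (g i)) dvd int (p ^ a i)" by simp
    then have "q i dvd int (p ^ a i) * g i" using cyc_ord_dvd[OF q_pos] by blast
    then show ?thesis by simp
  qed
  then show "g \<in> carrier G \<and> (\<forall>i\<in>{1..n}. q i dvd int p ^ a i * g i)" using g by (auto simp: Tset_def)
next
  assume h: "g \<in> carrier G \<and> (\<forall>i\<in>{1..n}. q i dvd int p ^ a i * g i)"
  have ex: "\<exists>c. c \<le> a i \<and> cyc_ord (q i) (g i) = p ^ c" if i: "i \<in> {1..n}" for i
  proof -
    have "q i dvd int (p ^ a i) * g i" using h i by simp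
    then have "int (cyc_ord (q i) (g i)) dvd int (p ^ a i)" using cyc_ord_dvd[OF q_pos] by blast
    then have "cyc_ord (q i) (g i) dvd p ^ a i" by (simp only: of_nat_dvd_iff)
    then show ?thesis using divides_primepow_nat[OF pprime] by blast
  qed
  define b where "b i = (SOME c. c \<le> a i \<and> cyc_ord (q i) (g i) = p ^ c)" for i
  have "b i \<le> a i \<and> cyc_ord (q i) (g i) = p ^ b i" if "i \<in> {1..n}" for i
    unfolding b_def by (rule someI_ex[OF ex[OF that]])
  then have "b \<in> {b. \<forall>i\<in>{1..n}. b i \<le> a i}" "g \<in> Tset p n lam b"
    using h unfolding Tset_def by auto
  then show "g \<in> Rset p n lam a" unfolding Rset_def by blast
qed

lemma Om_iff:
  "g \<in> Om G (p ^ j) \<longleftrightarrow> g \<in> carrier G \<and> (\<forall>k\<in>{1..n}. int p ^ (lam k - j) dvd g k)"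
proof -
  have "g [^]\<^bsub>G\<^esub> (p ^ j) = \<one>\<^bsub>G\<^esub> \<longleftrightarrow> (\<forall>k\<in>{1..n}. q k dvd int p ^ j * g k)"
    by (auto simp: pow_eq one_eq fun_eq_iff)
  then show ?thesis using pow_dvd_cancel[OF p_pos] by (auto simp: Om_def)
qed

lemma Pw_iff:
  "g \<in> Pw G (p ^ t) \<longleftrightarrow> g \<in> carrier G \<and> (\<forall>k\<in>{1..n}. int p ^ (min t (lam k)) dvd g k)"
proof
  assume "g \<in> Pw G (p ^ t)"
  then obtain h where h: "h \<in> carrier G" "g = h [^]\<^bsub>G\<^esub> (p ^ t)" by (auto simp: Pw_def)
  have gc: "g \<in> carrier G" using h grp_G by (simp add: monoid.nat_pow_closed group.is_monoid)
  have "int p ^ (min t (lam k)) dvd g k" if k: "k \<in> {1..n}" for k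
  proof -
    have gk: "g k = (int p ^ t * h k) mod q k" using h k by (simp add: pow_eq)
    have d1: "int p ^ (min t (lam k)) dvd q k" by (simp add: le_imp_power_dvd)
    have d2: "int p ^ (min t (lam k)) dvd int p ^ t * h k" by (simp add: le_imp_power_dvd)
    show ?thesis unfolding gk using d1 d2 by (simp add: dvd_mod)
  qed
  then show "g \<in> carrier G \<and> (\<forall>k\<in>{1..n}. int p ^ (min t (lam k)) dvd g k)" using gc by auto
next
  assume g: "g \<in> carrier G \<and> (\<forall>k\<in>{1..n}. int p ^ (min t (lam k)) dvd g k)"
  define h where "h k = (if k \<in> {1..n} \<and> t \<le> lam k then g k div int p ^ t else 0)" for k
  have hc: "h \<in> carrier G"
  proof -
    have "0 \<le> g k div int p ^ t \<and> g k div int p ^ t < q k" if "k \<in> {1..n}" for k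
    proof -
      have "0 \<le> g k" "g k < q k" using g that by (auto simp: carrier_iff)
      moreover have "g k div int p ^ t \<le> g k" using `0 \<le> g k` p_pos
        using zdiv_mono2[of "g k" 1 "int p ^ t"] by simp
      ultimately show ?thesis using p_pos by (simp add: pos_imp_zdiv_nonneg_iff)
    qed
    then show ?thesis using q_pos by (auto simp: carrier_iff h_def)
  qed
  have "g = h [^]\<^bsub>G\<^esub> (p ^ t)"
  proof
    fix k
    show "g k = (h [^]\<^bsub>G\<^esub> (p ^ t)) k"
    proof (cases "k \<in> {1..n}")
      case False then show ?thesis using g by (auto simp: carrier_iff pow_eq)
    next
      case k: True
      have gk: "0 \<le> g k" "g k < q k" using g k by (auto simp: carrier_iff)
  have gout: "\<And>m. m \<notin> {1..n} \<Longrightarrow> g m = 0" using g by (simp add: carrier_iff)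
      show ?thesis
      proof (cases "t \<le> lam k")
        case True
        then have "int p ^ t dvd g k" using g k by (metis min.orderE)
        then have "int p ^ t * (g k div int p ^ t) = g k" by simp
        then show ?thesis using k True gk by (simp add: pow_eq h_def)
      next
        case False
        then have "q k dvd g k" using g k by (metis min.absorb2 nat_le_linear)
        then have "g k = 0" using gk by (metis zdvd_not_zless le_less)
        then show ?thesis using k False by (simp add: pow_eq h_def)
      qed
    qed
  qed
  then show "g \<in> Pw G (p ^ t)" using hc by (auto simp: Pw_def)
qed


definition single :: "nat \<Rightarrow> int \<Rightarrow> nat \<Rightarrow> int" where
  "single k v = (\<lambda>m. if m = k then v else 0)"

lemma single_carrier: "k \<in> {1..n} \<Longrightarrow> 0 \<le> v \<Longrightarrow> v < q k \<Longrightarrow> single k v \<in> carrier G"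
  using q_pos by (auto simp: carrier_iff single_def)

lemma Char_sub: "K \<in> Char G \<Longrightarrow> subgroup K G" by (simp add: Char_def)

lemma Char_img: "K \<in> Char G \<Longrightarrow> \<phi> \<in> iso G G \<Longrightarrow> g \<in> K \<Longrightarrow> \<phi> g \<in> K"
  unfolding Char_def by blast

lemma K_mult: "K \<in> Char G \<Longrightarrow> a \<in> K \<Longrightarrow> b \<in> K \<Longrightarrow> a \<otimes>\<^bsub>G\<^esub> b \<in> K"
  by (rule subgroup.m_closed[OF Char_sub])
lemma K_one: "K \<in> Char G \<Longrightarrow> \<one>\<^bsub>G\<^esub> \<in> K"
  by (rule subgroup.one_closed[OF Char_sub])
lemma K_pow: "K \<in> Char G \<Longrightarrow> a \<in> K \<Longrightarrow> a [^]\<^bsub>G\<^esub> (m::nat) \<in> K"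
proof (induction m)
  case 0 then show ?case using K_one[of K] by simp
next
  case (Suc m) then show ?case using K_mult[of K "a [^]\<^bsub>G\<^esub> m" a] by simp
qed
lemma K_carrier: "K \<in> Char G \<Longrightarrow> a \<in> K \<Longrightarrow> a \<in> carrier G"
  by (rule subgroup.mem_carrier[OF Char_sub])

lemma scale:
  assumes K: "K \<in> Char G" and w: "single k d \<in> K" and k: "k \<in> {1..n}"
    and dv: "d dvd v" and v: "0 \<le> v" "v < q k" and d: "d > 0"
  shows "single k v \<in> K"
proof -
  have "single k d [^]\<^bsub>G\<^esub> nat (v div d) = single k v"
  proof
    fix m show "(single k d [^]\<^bsub>G\<^esub> nat (v div d)) m = single k v m"
    proof (cases "m = k")
      case True
      have "int (nat (v div d)) * d = v" using dv v d by (simp add: pos_imp_zdiv_nonneg_iff)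
      then show ?thesis using True k v by (simp add: pow_eq single_def)
    qed (simp add: pow_eq single_def)
  qed
  then show ?thesis using K_pow[OF K w, of "nat (v div d)"] by simp
qed

lemma mult_out: "m \<notin> {1..n} \<Longrightarrow> (g \<otimes>\<^bsub>G\<^esub> h) m = 0"
  unfolding mult_eq by (simp only: if_not_P) simp

lemma mult_in: "k \<in> {1..n} \<Longrightarrow> (g \<otimes>\<^bsub>G\<^esub> h) k = (g k + h k) mod q k"
  by (simp add: mult_eq)

lemma gen_in:
  assumes K: "K \<in> Char G" and g: "g \<in> carrier G"
    and s: "\<And>k. k \<in> {1..n} \<Longrightarrow> single k (g k) \<in> K"
  shows "g \<in> K"
proof -
  have "m \<le> n \<Longrightarrow> (\<lambda>k. if k \<in> {1..m} then g k else 0) \<in> K" for m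
  proof (induction m)
    case 0
    have e: "(\<lambda>k. if k \<in> {1..0::nat} then g k else 0) = \<one>\<^bsub>G\<^esub>" by (rule ext) (simp add: one_eq)
    show ?case unfolding e by (rule K_one[OF K])
  next
    case (Suc m)
    have eq: "(\<lambda>k. if k \<in> {1..Suc m} then g k else 0) =
          (\<lambda>k. if k \<in> {1..m} then g k else 0) \<otimes>\<^bsub>G\<^esub> single (Suc m) (g (Suc m))"
    proof
      fix k show "(if k \<in> {1..Suc m} then g k else 0) =
          ((\<lambda>k. if k \<in> {1..m} then g k else 0) \<otimes>\<^bsub>G\<^esub> single (Suc m) (g (Suc m))) k"
      proof (cases "k \<in> {1..n}")
        case True
        then have gk: "0 \<le> g k" "g k < q k" using g by (auto simp: carrier_iff)
        show ?thesis
        proof (cases "k \<le> m")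
          case True then show ?thesis using gk `k \<in> {1..n}` by (simp add: mult_eq single_def)
        next
          case False
          show ?thesis
          proof (cases "k = Suc m")
            case True
            have sm: "Suc m \<in> {1..n}" using `k \<in> {1..n}` True by simp
            have r: "0 \<le> g (Suc m)" "g (Suc m) < q (Suc m)" using gk True by simp_all
            have a1: "Suc m \<notin> {1..m}" by simp
            have a2: "Suc m \<in> {1..Suc m}" by simp
            have a3: "single (Suc m) (g (Suc m)) (Suc m) = g (Suc m)" by (simp add: single_def)
            have a4: "(0 + g (Suc m)) mod q (Suc m) = g (Suc m)" using r by simp
            show ?thesis unfolding True by (simp only: mult_in[OF sm] a1 a2 a3 if_True if_False a4)
          next
            case False
            then have "k \<notin> {1..Suc m}" "k \<notin> {1..m}" using `\<not> k \<le> m` by auto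
            then show ?thesis using False `k \<in> {1..n}` by (simp add: mult_eq single_def)
          qed
        qed
      next
        case False
        then have "k \<notin> {1..Suc m}" using Suc.prems by auto
        then show ?thesis by (simp only: if_not_P if_False mult_out[OF False])
      qed
    qed
    have ih: "(\<lambda>k. if k \<in> {1..m} then g k else 0) \<in> K" using Suc.IH Suc.prems by simp
    have sk: "single (Suc m) (g (Suc m)) \<in> K" using s Suc.prems by simp
    show ?case by (subst eq) (rule K_mult[OF K ih sk])
  qed
  from this[of n] have tn: "(\<lambda>k. if k \<in> {1..n} then g k else 0) \<in> K" by simp
  have eqg: "(\<lambda>k. if k \<in> {1..n} then g k else 0) = g"
  proof
    fix k show "(if k \<in> {1..n} then g k else 0) = g k"
    proof (cases "k \<in> {1..n}")
      case True then show ?thesis by (simp only: if_P)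
    next
      case False
      then have "g k = 0" using g unfolding carrier_iff by blast
      then show ?thesis by (simp only: if_not_P[OF False])
    qed
  qed
  show ?thesis by (subst eqg[symmetric]) (rule tn)
qed

lemma iso_by_inv:
  assumes f: "\<And>g. g \<in> carrier G \<Longrightarrow> f g \<in> carrier G"
    and f': "\<And>g. g \<in> carrier G \<Longrightarrow> f' g \<in> carrier G"
    and inv1: "\<And>g. g \<in> carrier G \<Longrightarrow> f' (f g) = g"
    and inv2: "\<And>g. g \<in> carrier G \<Longrightarrow> f (f' g) = g"
    and hom: "\<And>g h. g \<in> carrier G \<Longrightarrow> h \<in> carrier G \<Longrightarrow> f (g \<otimes>\<^bsub>G\<^esub> h) = f g \<otimes>\<^bsub>G\<^esub> f h"
  shows "f \<in> iso G G"
proof -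
  have "bij_betw f (carrier G) (carrier G)"
    by (rule bij_betw_byWitness[where f'=f']) (simp_all add: inv1 inv2 image_subset_iff f f')
  moreover have "f \<in> hom G G" unfolding hom_def using f hom by (simp add: Pi_iff)
  ultimately show ?thesis by (simp add: iso_def)
qed

definition sigma :: "nat \<Rightarrow> (nat \<Rightarrow> int) \<Rightarrow> nat \<Rightarrow> int" where
  "sigma i g = (\<lambda>m. if m \<in> {1..n} then (if m = i then g m else (- g m) mod q m) else 0)"

lemma sigma_out: "m \<notin> {1..n} \<Longrightarrow> sigma i g m = 0"
  unfolding sigma_def by (simp only: if_not_P) simp

lemma sigma_iso: assumes i: "i \<in> {1..n}" shows "sigma i \<in> iso G G"
proof (rule iso_by_inv[where f' = "sigma i"])
  fix g assume g: "g \<in> carrier G"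
  have gout: "\<And>m. m \<notin> {1..n} \<Longrightarrow> g m = 0" using g by (simp add: carrier_iff)
  have gin: "\<And>m. m \<in> {1..n} \<Longrightarrow> 0 \<le> g m \<and> g m < q m" using g by (simp add: carrier_iff)
  show sc: "sigma i g \<in> carrier G" unfolding carrier_iff
  proof (intro conjI ballI allI impI)
    fix m assume m: "m \<in> {1..n}"
    then show "0 \<le> sigma i g m" "sigma i g m < q m" using gin[OF m] q_pos[of m]
      by (cases "m = i", simp_all add: sigma_def)+
  next
    fix m assume "m \<notin> {1..n}" then show "sigma i g m = 0" by (rule sigma_out)
  qed
  then show "sigma i g \<in> carrier G" .
  have "sigma i (sigma i g) = g"
  proof
    fix m show "sigma i (sigma i g) m = g m"
    proof (cases "m \<in> {1..n}")
      case True
      have "(- ((- g m) mod q m)) mod q m = g m" using gin[OF True]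
        by (metis add.inverse_inverse mod_minus_eq mod_pos_pos_trivial)
      then show ?thesis using True by (simp add: sigma_def)
    next
      case False then show ?thesis using gout[OF False] sigma_out[OF False] by simp
    qed
  qed
  then show "sigma i (sigma i g) = g" "sigma i (sigma i g) = g" by simp_all
next
  fix g h assume g: "g \<in> carrier G" and h: "h \<in> carrier G"
  show "sigma i (g \<otimes>\<^bsub>G\<^esub> h) = sigma i g \<otimes>\<^bsub>G\<^esub> sigma i h"
  proof
    fix m
    show "sigma i (g \<otimes>\<^bsub>G\<^esub> h) m = (sigma i g \<otimes>\<^bsub>G\<^esub> sigma i h) m"
    proof (cases "m \<in> {1..n}")
      case True
      have "(- ((g m + h m) mod q m)) mod q m = ((- g m) mod q m + (- h m) mod q m) mod q m"
        by (metis minus_add_distrib mod_add_eq mod_minus_eq)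
      then show ?thesis using True by (cases "m = i") (simp_all add: sigma_def mult_eq)
    next
      case False then show ?thesis by (simp only: mult_out[OF False] sigma_out[OF False])
    qed
  qed
qed

definition tau :: "nat \<Rightarrow> nat \<Rightarrow> int \<Rightarrow> (nat \<Rightarrow> int) \<Rightarrow> nat \<Rightarrow> int" where
  "tau k i c g = (\<lambda>m. if m \<in> {1..n} then (if m = k then (g k + c * g i) mod q k else g m) else 0)"

lemma tau_out: "m \<notin> {1..n} \<Longrightarrow> tau k i c g m = 0"
  unfolding tau_def by (simp only: if_not_P) simp

lemma mod_mult_transfer:
  fixes c x Q R :: int
  assumes "R dvd c * Q"
  shows "(c * (x mod Q)) mod R = (c * x) mod R"
proof -
  have "c * x = c * (x mod Q) + (c * Q) * (x div Q)" by (metis distrib_left div_mult_mod_eq mult.assoc add.commute mult.commute)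
  then show ?thesis using assms by (metis mod_mult_self2 mod_add_right_eq dvd_mult2 dvd_imp_mod_0 add_0_right mod_mod_trivial mod_add_eq)
qed

lemma tau_iso:
  assumes i: "i \<in> {1..n}" and k: "k \<in> {1..n}" and ki: "k \<noteq> i" and dv: "q k dvd c * q i"
  shows "tau k i c \<in> iso G G"
proof (rule iso_by_inv[where f' = "tau k i (- c)"])
  fix g assume g: "g \<in> carrier G"
  show "tau k i c g \<in> carrier G" using g q_pos by (auto simp: carrier_iff tau_def)
  show "tau k i (- c) g \<in> carrier G" using g q_pos by (auto simp: carrier_iff tau_def)
  have gk: "0 \<le> g k" "g k < q k" using g k by (auto simp: carrier_iff)
  have gout: "\<And>m. m \<notin> {1..n} \<Longrightarrow> g m = 0" using g by (simp add: carrier_iff)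
  have e1: "((g k + c * g i) mod q k + - c * g i) mod q k = g k"
  proof -
    have "((g k + c * g i) mod q k + - c * g i) mod q k = ((g k + c * g i) + - c * g i) mod q k"
      by (rule mod_add_left_eq)
    then show ?thesis using gk by simp
  qed
  have e2: "((g k + - c * g i) mod q k + c * g i) mod q k = g k"
  proof -
    have "((g k + - c * g i) mod q k + c * g i) mod q k = ((g k + - c * g i) + c * g i) mod q k"
      by (rule mod_add_left_eq)
    then show ?thesis using gk by simp
  qed
  show "tau k i (- c) (tau k i c g) = g"
  proof
    fix m show "tau k i (- c) (tau k i c g) m = g m"
    proof (cases "m \<in> {1..n}")
      case True then show ?thesis using ki i e1 by (simp add: tau_def)
    next
      case False then show ?thesis using gout[OF False] tau_out[OF False] by simp
    qed
  qed
  show "tau k i c (tau k i (- c) g) = g"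
  proof
    fix m show "tau k i c (tau k i (- c) g) m = g m"
    proof (cases "m \<in> {1..n}")
      case True then show ?thesis using ki i e2 by (simp add: tau_def)
    next
      case False then show ?thesis using gout[OF False] tau_out[OF False] by simp
    qed
  qed
next
  fix g h assume g: "g \<in> carrier G" and h: "h \<in> carrier G"
  show "tau k i c (g \<otimes>\<^bsub>G\<^esub> h) = tau k i c g \<otimes>\<^bsub>G\<^esub> tau k i c h"
  proof
    fix m
    have "((g k + h k) mod q k + c * ((g i + h i) mod q i)) mod q k
        = ((g k + h k) + (c * ((g i + h i) mod q i)) mod q k) mod q k"
      by (simp add: mod_add_left_eq mod_add_right_eq)
    also have "\<dots> = ((g k + h k) + (c * (g i + h i)) mod q k) mod q k"
      using mod_mult_transfer[OF dv] by simp
    also have "\<dots> = ((g k + h k) + c * (g i + h i)) mod q k"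
      by (rule mod_add_right_eq)
    also have "\<dots> = ((g k + c * g i) + (h k + c * h i)) mod q k"
      by (rule arg_cong[where f="\<lambda>x. x mod q k"]) (simp add: algebra_simps)
    also have "\<dots> = ((g k + c * g i) mod q k + (h k + c * h i) mod q k) mod q k"
      by (simp add: mod_add_eq)
    finally have eq: "((g k + h k) mod q k + c * ((g i + h i) mod q i)) mod q k
      = ((g k + c * g i) mod q k + (h k + c * h i) mod q k) mod q k" .
    show "tau k i c (g \<otimes>\<^bsub>G\<^esub> h) m = (tau k i c g \<otimes>\<^bsub>G\<^esub> tau k i c h) m"
    proof (cases "m \<in> {1..n}")
      case True
      then show ?thesis using i k ki eq by (cases "m = k") (simp_all add: tau_def mult_eq)
    next
      case False then show ?thesis by (simp only: mult_out[OF False] tau_out[OF False])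
    qed
  qed
qed

end



context cp begin

lemma gcd_pow: assumes "0 \<le> x" shows "\<exists>s\<le>L. gcd x (int p ^ L) = int p ^ s"
proof -
  have "gcd (nat x) (p ^ L) dvd p ^ L" by simp
  then obtain s where "s \<le> L" "gcd (nat x) (p ^ L) = p ^ s"
    using divides_primepow_nat[OF pprime] by blast
  moreover have "gcd x (int p ^ L) = int (gcd (nat x) (p ^ L))"
    using assms by (metis gcd_int_int_eq int_nat_eq of_nat_power)
  ultimately show ?thesis by auto
qed

lemma not_dvd_succ: "\<not> int p ^ Suc s dvd int p ^ s"
proof
  assume "int p ^ Suc s dvd int p ^ s"
  then have "int p ^ Suc s \<le> int p ^ s" using p_pos by (intro zdvd_imp_le) auto
  moreover have "int p ^ s < int p ^ Suc s" using p_gt1 by (simp add: power_strict_increasing)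
  ultimately show False by simp
qed

lemma pow_lt_q: "e < lam k \<Longrightarrow> int p ^ e < q k"
  using p_gt1 by (simp add: power_strict_increasing)

lemma single_apply: "single k v m = (if m = k then v else 0)" by (simp add: single_def)

lemma single_zero: "single k 0 = \<one>\<^bsub>G\<^esub>"
  by (rule ext) (simp add: single_def one_eq)

lemma pow_single:
  assumes k: "k \<in> {1..n}"
  shows "single k v [^]\<^bsub>G\<^esub> (N::nat) = single k ((int N * v) mod q k)"
proof
  fix m show "(single k v [^]\<^bsub>G\<^esub> N) m = single k ((int N * v) mod q k) m"
  proof (cases "m = k")
    case True then show ?thesis using k by (simp add: pow_eq single_def)
  next
    case False then show ?thesis by (simp add: pow_eq single_def)
  qed
qed

lemma proj_in:
  assumes p2: "p \<noteq> 2" and K: "K \<in> Char G" and g: "g \<in> K" and i: "i \<in> {1..n}"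
  shows "single i (g i) \<in> K"
proof -
  have gc: "g \<in> carrier G" using K_carrier[OF K g] .
  have gi: "0 \<le> g i" "g i < q i" using gc i by (auto simp: carrier_iff)
  have z: "g \<otimes>\<^bsub>G\<^esub> sigma i g \<in> K"
    using K_mult[OF K g Char_img[OF K sigma_iso[OF i] g]] .
  have zeq: "g \<otimes>\<^bsub>G\<^esub> sigma i g = single i ((2 * g i) mod q i)"
  proof
    fix m show "(g \<otimes>\<^bsub>G\<^esub> sigma i g) m = single i ((2 * g i) mod q i) m"
    proof (cases "m \<in> {1..n}")
      case True
      show ?thesis
      proof (cases "m = i")
        case True then show ?thesis using i by (simp add: mult_eq sigma_def single_def)
      next
        case False
        have "(g m + (- g m) mod q m) mod q m = 0"
          by (simp add: mod_add_right_eq)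
        then show ?thesis using False `m \<in> {1..n}` by (simp add: mult_eq sigma_def single_def)
      qed
    next
      case False
      then have "m \<noteq> i" using i by blast
      then show ?thesis using mult_out[OF False] by (simp add: single_def)
    qed
  qed
  have "p > 2" using p2 p_gt1 by simp
  then have "odd p" using prime_odd_nat[OF pprime] by simp
  then have oq: "odd (q i)" by simp
  then obtain r where r: "q i = 2 * r + 1" by (metis oddE)
  have r0: "0 \<le> r" using q_pos[of i] r by simp
  have "single i ((2 * g i) mod q i) [^]\<^bsub>G\<^esub> nat (r + 1) = single i ((int (nat (r + 1)) * ((2 * g i) mod q i)) mod q i)"
    by (rule pow_single[OF i])
  also have "(int (nat (r + 1)) * ((2 * g i) mod q i)) mod q i = g i"
  proof -
    have "(int (nat (r + 1)) * ((2 * g i) mod q i)) mod q i = ((r + 1) * (2 * g i)) mod q i"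
      using r0 by (simp add: mod_mult_right_eq)
    also have "(r + 1) * (2 * g i) = g i + g i * q i" using r by (simp add: algebra_simps)
    also have "(g i + g i * q i) mod q i = g i" using gi by simp
    finally show ?thesis .
  qed
  finally show ?thesis using K_pow[OF K z, of "nat (r + 1)"] zeq by simp
qed

lemma get_x:
  assumes K: "K \<in> Char G" and w: "single i v \<in> K" and i: "i \<in> {1..n}"
    and v: "0 \<le> v" "v < q i" and e: "e < lam i" and nd: "\<not> int p ^ Suc e dvd v"
  shows "single i (int p ^ e) \<in> K"
proof -
  obtain s where s: "s \<le> lam i" "gcd v (q i) = int p ^ s" using gcd_pow[OF v(1)] by blast
  have se: "s \<le> e"
  proof (rule ccontr)
    assume "\<not> s \<le> e"
    then have "Suc e \<le> s" by simp
    then have "int p ^ Suc e dvd int p ^ s" by (rule le_imp_power_dvd)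
    also have "int p ^ s dvd v" using s(2) by (metis gcd_dvd1)
    finally show False using nd by simp
  qed
  obtain u w where uw: "u * v + w * q i = gcd v (q i)" using bezout_int by blast
  define c where "c = u * int p ^ (e - s)"
  have "c * v = int p ^ e - w * int p ^ (e - s) * q i"
  proof -
    have "c * v = (u * v) * int p ^ (e - s)" by (simp add: c_def algebra_simps)
    also have "\<dots> = (int p ^ s - w * q i) * int p ^ (e - s)"
    proof -
      have uv: "u * v = int p ^ s - w * q i" using uw s(2) by linarith
      show ?thesis by (simp only: uv)
    qed
    also have "\<dots> = int p ^ s * int p ^ (e - s) - w * int p ^ (e - s) * q i" by (simp add: algebra_simps)
    also have "int p ^ s * int p ^ (e - s) = int p ^ e" using se by (simp add: power_add[symmetric])
    finally show ?thesis .
  qed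
  then have cv: "(c * v) mod q i = int p ^ e"
  proof -
    assume cv0: "c * v = int p ^ e - w * int p ^ (e - s) * q i"
    have "(c * v) mod q i = (int p ^ e + (- (w * int p ^ (e - s))) * q i) mod q i"
      unfolding cv0 by (rule arg_cong[where f="\<lambda>x. x mod q i"]) (simp add: algebra_simps)
    also have "\<dots> = int p ^ e mod q i" by (rule mod_mult_self1)
    also have "\<dots> = int p ^ e" using pow_lt_q[OF e] p_pos by simp
    finally show ?thesis .
  qed
  have "single i v [^]\<^bsub>G\<^esub> nat (c mod q i) = single i ((int (nat (c mod q i)) * v) mod q i)"
    by (rule pow_single[OF i])
  also have "(int (nat (c mod q i)) * v) mod q i = int p ^ e"
  proof -
    have "int (nat (c mod q i)) = c mod q i" using q_pos[of i] by simp
    then have "(int (nat (c mod q i)) * v) mod q i = (c * v) mod q i" by (simp add: mod_mult_left_eq)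
    then show ?thesis using cv by simp
  qed
  finally show ?thesis using K_pow[OF K w, of "nat (c mod q i)"] by simp
qed

lemma transfer:
  assumes K: "K \<in> Char G" and x: "single i (int p ^ e) \<in> K" and i: "i \<in> {1..n}" and k: "k \<in> {1..n}"
    and ki: "k \<noteq> i" and ef: "e \<le> f" and fk: "f < lam k" and ei: "e < lam i" and kf: "lam k \<le> f - e + lam i"
  shows "single k (int p ^ f) \<in> K"
proof -
  define c where "c = int p ^ (f - e)"
  have dv: "q k dvd c * q i" unfolding c_def
    by (metis kf le_imp_power_dvd power_add)
  have tx: "tau k i c (single i (int p ^ e)) \<in> K" by (rule Char_img[OF K tau_iso[OF i k ki dv] x])
  have xc: "single i (int p ^ e) \<in> carrier G" using K_carrier[OF K x] .
  have sc: "single k (int p ^ f) \<in> carrier G" using single_carrier[OF k] pow_lt_q[OF fk] by simp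
  have pf: "c * int p ^ e = int p ^ f" unfolding c_def using ef by (simp add: power_add[symmetric])
  have teq: "tau k i c (single i (int p ^ e)) = single i (int p ^ e) \<otimes>\<^bsub>G\<^esub> single k (int p ^ f)"
  proof
    fix m show "tau k i c (single i (int p ^ e)) m = (single i (int p ^ e) \<otimes>\<^bsub>G\<^esub> single k (int p ^ f)) m"
    proof (cases "m \<in> {1..n}")
      case True
      show ?thesis
      proof (cases "m = k")
        case True
        then show ?thesis using ki k pf pow_lt_q[OF fk] by (simp add: tau_def mult_eq single_def)
      next
        case False
        show ?thesis
        proof (cases "m = i")
          case True
          then show ?thesis using ki i pow_lt_q[OF ei] by (simp add: tau_def mult_eq single_def)
        next
          case False
          then show ?thesis using `m \<noteq> k` `m \<in> {1..n}` by (simp add: tau_def mult_eq single_def)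
        qed
      qed
    next
      case False
      then show ?thesis by (simp only: tau_out[OF False] mult_out[OF False])
    qed
  qed
  interpret grp: group G by (rule grp_G)
  have ix: "inv\<^bsub>G\<^esub> single i (int p ^ e) \<in> K"
    using Char_sub[OF K] x by (rule subgroup.m_inv_closed)
  have "inv\<^bsub>G\<^esub> single i (int p ^ e) \<otimes>\<^bsub>G\<^esub> tau k i c (single i (int p ^ e)) = single k (int p ^ f)"
    unfolding teq using xc sc by (simp add: grp.m_assoc[symmetric])
  then show ?thesis using K_mult[OF K ix tx] by simp
qed

end

locale cp2 = cp +
  assumes p2: "p \<noteq> 2"
    and mono: "\<And>i k. i \<in> {1..n} \<Longrightarrow> k \<in> {1..n} \<Longrightarrow> i < k \<Longrightarrow> lam i < lam k"
begin

definition aJ :: "nat \<Rightarrow> nat \<Rightarrow> nat \<Rightarrow> nat" where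
  "aJ i j k = (if k \<ge> i then j else nat (max 0 (int j - (int (lam i) - int (lam k)))))"

lemma Jset_iff: "g \<in> Jset p n lam i j \<longleftrightarrow> g \<in> carrier G \<and> (\<forall>k\<in>{1..n}. int p ^ (lam k - aJ i j k) dvd g k)"
proof -
  have "Jset p n lam i j = Rset p n lam (aJ i j)" unfolding Jset_def aJ_def by simp
  then show ?thesis using Rset_iff pow_dvd_cancel[OF p_pos] by simp
qed

lemma mono_le: "i \<in> {1..n} \<Longrightarrow> k \<in> {1..n} \<Longrightarrow> i \<le> k \<Longrightarrow> lam i \<le> lam k"
  using mono by (cases "i = k") (auto simp: le_less)

lemma exp_eq:
  assumes i: "i \<in> {1..n}" and k: "k \<in> {1..n}" and j: "j \<le> lam i"
  shows "lam k - aJ i j k = max (lam k - j) (min (lam i - j) (lam k))"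
proof (cases "i \<le> k")
  case True
  then have "lam i \<le> lam k" using mono_le i k by blast
  then show ?thesis using True by (simp add: aJ_def max_def min_def; arith)
next
  case False
  then have lt: "lam k < lam i" using mono i k by simp
  show ?thesis
  proof (cases "lam i - lam k < j")
    case True
    then have "aJ i j k = j - (lam i - lam k)" using False lt unfolding aJ_def by simp
    then show ?thesis using True lt j by (simp add: max_def min_def; arith)
  next
    case False
    then have "aJ i j k = 0" using `\<not> i \<le> k` lt unfolding aJ_def by simp
    then show ?thesis using False lt j by (simp add: max_def min_def; arith)
  qed
qed

lemma Jset_eq:
  assumes i: "i \<in> {1..n}" and j: "j \<le> lam i"
  shows "Jset p n lam i j = Om G (p ^ j) \<inter> Pw G (p ^ (lam i - j))"
proof (rule Set.set_eqI)
  fix g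
  have "\<forall>k\<in>{1..n}. (int p ^ (lam k - aJ i j k) dvd g k \<longleftrightarrow>
          int p ^ (lam k - j) dvd g k \<and> int p ^ (min (lam i - j) (lam k)) dvd g k)"
    using exp_eq[OF i _ j] pow_dvd_max by simp
  then show "g \<in> Jset p n lam i j \<longleftrightarrow> g \<in> Om G (p ^ j) \<inter> Pw G (p ^ (lam i - j))"
    unfolding Jset_iff Int_iff Om_iff Pw_iff by blast
qed

lemma Jset_Char: "i \<in> {1..n} \<Longrightarrow> j \<le> lam i \<Longrightarrow> Jset p n lam i j \<in> Char G"
  using Jset_eq Char_Int[OF grp_G Char_Om[OF comm_G] Char_Pw[OF comm_G]] by simp

lemma single_in_J:
  assumes k: "k \<in> {1..n}" and dv: "int p ^ (lam k - aJ i j k) dvd v" and v: "0 \<le> v" "v < q k"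
  shows "single k v \<in> Jset p n lam i j"
  unfolding Jset_iff using single_carrier[OF k v] dv by (auto simp: single_def)

lemma aJ_arith:
  assumes i: "i \<in> {1..n}" and k: "k \<in> {1..n}" and ki: "k \<noteq> i" and j: "j \<le> lam i" "1 \<le> j"
    and f: "lam k - aJ i j k < lam k"
  shows "lam i - j \<le> lam k - aJ i j k \<and> lam k \<le> (lam k - aJ i j k) - (lam i - j) + lam i"
proof (cases "i < k")
  case True
  then have "lam i < lam k" using mono i k by blast
  then show ?thesis using True j by (simp add: aJ_def; arith)
next
  case False
  then have lt: "lam k < lam i" "k < i" using mono i k ki by auto
  have "aJ i j k > 0" using f by simp
  then have "aJ i j k = j - (lam i - lam k)" "lam i - lam k < j" using lt unfolding aJ_def by (simp_all split: if_splits)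
  then show ?thesis using lt j by (simp; arith)
qed

lemma key:
  assumes K: "K \<in> Char G" and g: "g \<in> K" and i: "i \<in> {1..n}" and j: "1 \<le> j" "j \<le> lam i"
    and nd: "\<not> int p ^ (lam i - j + 1) dvd g i"
  shows "Jset p n lam i j \<subseteq> K"
proof
  have gc: "g \<in> carrier G" using K_carrier[OF K g] .
  have gi: "0 \<le> g i" "g i < q i" using gc i by (auto simp: carrier_iff)
  have si: "single i (g i) \<in> K" by (rule proj_in[OF p2 K g i])
  have ei: "lam i - j < lam i" using j by simp
  have x: "single i (int p ^ (lam i - j)) \<in> K"
    by (rule get_x[OF K si i gi ei]) (use nd j in simp)
  fix h assume h: "h \<in> Jset p n lam i j"
  have hc: "h \<in> carrier G" using h Jset_iff by blast
  show "h \<in> K"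
  proof (rule gen_in[OF K hc])
    fix k assume k: "k \<in> {1..n}"
    define f where "f = lam k - aJ i j k"
    have hk: "0 \<le> h k" "h k < q k" using hc k by (auto simp: carrier_iff)
    have dvf: "int p ^ f dvd h k" using h k Jset_iff f_def by blast
    show "single k (h k) \<in> K"
    proof (cases "f < lam k")
      case False
      then have "q k dvd h k" using dvf by (meson dvd_trans le_imp_power_dvd not_less)
      then have "h k = 0" using hk by (metis zdvd_not_zless le_less)
      then show ?thesis using single_zero K_one[OF K] by simp
    next
      case True
      have sf: "single k (int p ^ f) \<in> K"
      proof (cases "k = i")
        case True
        then have "f = lam i - j" unfolding f_def aJ_def by simp
        then show ?thesis using x True by simp
      next
        case False
        have ar: "lam i - j \<le> f \<and> lam k \<le> f - (lam i - j) + lam i"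
          using aJ_arith[OF i k False j(2) j(1)] True unfolding f_def by blast
        show ?thesis
          by (rule transfer[OF K x i k False]) (use ar True ei in auto)
      qed
      show ?thesis by (rule scale[OF K sf k dvf hk]) (use p_pos in simp)
    qed
  qed
qed

end



context cp2 begin

lemma J_ji:
  assumes i: "i \<in> {1..n}" and j: "j \<in> {1..lam i}"
  shows "join_irreducible_Char G (Jset p n lam i j)"
proof -
  let ?J = "Jset p n lam i j"
  have j1: "1 \<le> j" and j2: "j \<le> lam i" using j by auto
  have JC: "?J \<in> Char G" using Jset_Char[OF i j2] .
  define x where "x = single i (int p ^ (lam i - j))"
  have ei: "lam i - j < lam i" using j1 j2 by simp
  have aii: "aJ i j i = j" by (simp add: aJ_def)
  have xJ: "x \<in> ?J" unfolding x_def
    by (rule single_in_J[OF i]) (use aii pow_lt_q[OF ei] in simp_all)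
  have xi: "x i = int p ^ (lam i - j)" by (simp add: x_def single_def)
  have xne: "x \<notin> {\<one>\<^bsub>G\<^esub>}" using xi p_pos by (auto simp: one_eq)
  have nb: "\<not> (\<forall>K\<in>Char G. ?J \<subseteq> K)" using Char_one[OF grp_G] xJ xne by blast
  have nj: "\<not> (\<exists>A\<in>Char G. \<exists>B\<in>Char G. A \<subset> ?J \<and> B \<subset> ?J \<and> is_join_Char G A B ?J)"
  proof
    assume "\<exists>A\<in>Char G. \<exists>B\<in>Char G. A \<subset> ?J \<and> B \<subset> ?J \<and> is_join_Char G A B ?J"
    then obtain A B where A: "A \<in> Char G" and B: "B \<in> Char G" and AJ: "A \<subset> ?J" and BJ: "B \<subset> ?J"
      and jn: "is_join_Char G A B ?J" by blast
    interpret grp: group G by (rule grp_G)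
    let ?C = "A <#>\<^bsub>G\<^esub> B"
    have CC: "?C \<in> Char G" by (rule Char_setmult[OF comm_G A B])
    have AC: "A \<subseteq> ?C"
    proof
      fix a assume a: "a \<in> A"
      have "a = a \<otimes>\<^bsub>G\<^esub> \<one>\<^bsub>G\<^esub>" using K_carrier[OF A a] by simp
      then show "a \<in> ?C" unfolding set_mult_def using a K_one[OF B] by blast
    qed
    have BC: "B \<subseteq> ?C"
    proof
      fix b assume b: "b \<in> B"
      have "b = \<one>\<^bsub>G\<^esub> \<otimes>\<^bsub>G\<^esub> b" using K_carrier[OF B b] by simp
      then show "b \<in> ?C" unfolding set_mult_def using b K_one[OF A] by blast
    qed
    have "?J \<subseteq> ?C" using jn CC AC BC unfolding is_join_Char_def by blast
    then have "x \<in> ?C" using xJ by blast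
    then obtain a b where a: "a \<in> A" and b: "b \<in> B" and xab: "x = a \<otimes>\<^bsub>G\<^esub> b"
      unfolding set_mult_def by blast
    have xi2: "x i = (a i + b i) mod q i" unfolding xab by (rule mult_in[OF i])
    let ?d = "int p ^ Suc (lam i - j)"
    have dq: "?d dvd q i" using j1 j2 by (intro le_imp_power_dvd) simp
    have "\<not> (?d dvd a i \<and> ?d dvd b i)"
    proof
      assume "?d dvd a i \<and> ?d dvd b i"
      then have "?d dvd (a i + b i) mod q i" using dq by (simp add: dvd_mod)
      then have "?d dvd int p ^ (lam i - j)" using xi xi2 by simp
      then show False using not_dvd_succ by blast
    qed
    then have "?J \<subseteq> A \<or> ?J \<subseteq> B"
      using key[OF A a i j1 j2] key[OF B b i j1 j2] by auto
    then show False using AJ BJ by blast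
  qed
  show ?thesis unfolding join_irreducible_Char_def using JC nb nj by blast
qed

lemma ji_J:
  assumes H: "join_irreducible_Char G H"
  shows "\<exists>i j. H = Jset p n lam i j \<and> i \<in> {1..n} \<and> j \<in> {1..lam i}"
proof -
  have HC: "H \<in> Char G" using H by (simp add: join_irreducible_Char_def)
  define S where "S = {J. \<exists>i j. i \<in> {1..n} \<and> j \<in> {1..lam i} \<and> J = Jset p n lam i j \<and> J \<subseteq> H}"
  have "S \<subseteq> (\<lambda>(i, j). Jset p n lam i j) ` (SIGMA i:{1..n}. {1..lam i})"
    unfolding S_def by auto
  then have fin: "finite S" by (rule finite_subset) auto
  have SC: "S \<subseteq> Char G" unfolding S_def using Jset_Char by auto
  have SH: "\<forall>A\<in>S. A \<subseteq> H" unfolding S_def by blast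
  have Hsub: "H \<subseteq> \<Inter>{K\<in>Char G. \<Union>S \<subseteq> K}"
  proof
    fix g assume gH: "g \<in> H"
    have gc: "g \<in> carrier G" using K_carrier[OF HC gH] .
    show "g \<in> \<Inter>{K\<in>Char G. \<Union>S \<subseteq> K}"
    proof
      fix K assume "K \<in> {K\<in>Char G. \<Union>S \<subseteq> K}"
      then have K: "K \<in> Char G" and SK: "\<Union>S \<subseteq> K" by auto
      show "g \<in> K"
      proof (rule gen_in[OF K gc])
        fix k assume k: "k \<in> {1..n}"
        have gk: "0 \<le> g k" "g k < q k" using gc k by (auto simp: carrier_iff)
        show "single k (g k) \<in> K"
        proof (cases "g k = 0")
          case True then show ?thesis using single_zero K_one[OF K] by simp
        next
          case False
          obtain s where s: "s \<le> lam k" "gcd (g k) (q k) = int p ^ s" using gcd_pow[OF gk(1)] by blast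
          have sd: "int p ^ s dvd g k" using s(2) by (metis gcd_dvd1)
          have slt: "s < lam k"
          proof (rule ccontr)
            assume "\<not> s < lam k"
            then have "s = lam k" using s(1) by simp
            then have "q k dvd g k" using sd by simp
            then show False using gk False by (metis zdvd_not_zless le_less)
          qed
          define j where "j = lam k - s"
          have j1: "1 \<le> j" and j2: "j \<le> lam k" using slt unfolding j_def by auto
          have nd: "\<not> int p ^ (lam k - j + 1) dvd g k"
          proof
            assume "int p ^ (lam k - j + 1) dvd g k"
            then have d1: "int p ^ Suc s dvd g k" using slt unfolding j_def by simp
            have d2: "int p ^ Suc s dvd q k" using slt by (intro le_imp_power_dvd) simp
            have "int p ^ Suc s dvd gcd (g k) (q k)" using d1 d2 by (rule gcd_greatest)
            then have "int p ^ Suc s dvd int p ^ s" using s(2) by simp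
            then show False using not_dvd_succ by blast
          qed
          have sH: "single k (g k) \<in> H" by (rule proj_in[OF p2 HC gH k])
          have nd': "\<not> int p ^ (lam k - j + 1) dvd single k (g k) k" using nd by (simp add: single_def)
          have JH: "Jset p n lam k j \<subseteq> H" by (rule key[OF HC sH k j1 j2 nd'])
          have JS: "Jset p n lam k j \<in> S" unfolding S_def using k j1 j2 JH by auto
          have akk: "aJ k j k = j" by (simp add: aJ_def)
          have "lam k - j = s" using slt unfolding j_def by simp
          then have "single k (g k) \<in> Jset p n lam k j"
            using single_in_J[OF k _ gk] akk sd by simp
          then show ?thesis using JS SK by blast
        qed
      qed
    qed
  qed
  have "H \<in> S" by (rule ji_finite[OF grp_G H fin SC SH Hsub])
  then show ?thesis unfolding S_def by blast
qed

theorem main: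
  "{H. join_irreducible_Char G H} = {Jset p n lam i j | i j. i \<in> {1..n} \<and> j \<in> {1..lam i}}"
proof (rule Set.set_eqI)
  fix H
  show "H \<in> {H. join_irreducible_Char G H} \<longleftrightarrow> H \<in> {Jset p n lam i j | i j. i \<in> {1..n} \<and> j \<in> {1..lam i}}"
  proof
    assume "H \<in> {H. join_irreducible_Char G H}"
    then show "H \<in> {Jset p n lam i j | i j. i \<in> {1..n} \<and> j \<in> {1..lam i}}" using ji_J by blast
  next
    assume "H \<in> {Jset p n lam i j | i j. i \<in> {1..n} \<and> j \<in> {1..lam i}}"
    then obtain i j where "H = Jset p n lam i j" "i \<in> {1..n}" "j \<in> {1..lam i}" by blast
    then show "H \<in> {H. join_irreducible_Char G H}" using J_ji by blast
  qed
qed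

end

theorem mainTheorem16:
  fixes p n :: nat and lam :: "nat \<Rightarrow> nat"
  assumes "Factorial_Ring.prime p" and "p \<noteq> 2"
    and "0 < lam 1"
    and "\<And>i k. i \<in> {1..n} \<Longrightarrow> k \<in> {1..n} \<Longrightarrow> i < k \<Longrightarrow> lam i < lam k"
  shows "{H. join_irreducible_Char (cycprod p n lam) H} =
         {Jset p n lam i j | i j. i \<in> {1..n} \<and> j \<in> {1..lam i}}"
proof -
  interpret cp2 p n lam
    using assms by (unfold_locales) auto
  show ?thesis by (rule main)
qed



end
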